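(* Let $k>1$ and let $\varphi$ be as in the context. If $M,N\models\varphi$, $M$ is a substructure of $N$, and $N$ has a solution, then $M$ has a solution.
   Context: Fix a natural number $k>1$. $Z_2=\{0,1\}$ is the two-element group. The language $\mathcal{L}$ consists of: unary predicates $I,K,R,P,G^a,H^a$; binary predicates $\in$ and $H^b$; ternary predicates $\pi,\rho,+,G^b$; a 4-ary predicate $h$; a 5-ary predicate $g$; a $(k+1)$-ary predicate $Q_l$ for each $l<\omega$; and constants $c_a$ for each $a\in Z_2\cup\omega$. $K(M),I(M)$ denote the interpretations of $K,I$ in $M$. $T$ is the collection of the following conditions on an $\mathcal{L}$-structure: (1) $I$ is infinite, $K$ is (identified via $\in$ with) the collection of $k$-element subsets of $I$, and $\in$ is membership between elements of $I$ and of $K$. (2) $I,K,R,G^a,H^a$ are pairwise disjoint and their union with the constants $c_a$, $a\in Z_2$, is $P$. (3) $R(c_a)$ for every $a\in\omega$. (4) $G^b(l,u,x)$ implies $R(l)$, $K(u)$; $H^b(u,x)$ implies $K(u)$. (5) If $x\notin P$ then $G^b(l,u,x)$ for some $l,u$ or $H^b(u,x)$ for some $u$; for all $l\in R$, $u,v\in K$, the sets $P$, $H^b(u,-)$, $G^b(l,v,-)$ are pairwise disjoint. (6) $\pi(u,a,z)$ implies $K(u)$, $G^a(a)$, $z$ a constant indexed by $Z_2$. (7) $\rho(l,b,z)$ implies $R(l)$, $H^a(b)$, $z$ a constant indexed by $Z_2$. (8) $g(l,u,a,v,w)$ implies $R(l),K(u),G^a(a),G^b(l,u,v),G^b(l,u,w)$.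 (9) $h(u,b,x,y)$ implies $K(u),H^a(b),H^b(u,x),H^b(u,y)$. (10) The constants $c_a$, $a\in Z_2$, with $+$ form a copy of $Z_2$. (11) $+$ on $G^a$ gives a subgroup of $\prod_K Z_2$ containing $\coprod_K Z_2$, projections given by $\pi$. (12) $+$ on $H^a$ gives a subgroup of $\prod_R Z_2$ containing $\coprod_R Z_2$, projections given by $\rho$. (13) For $l\in R,u\in K$, $G^b(l,u,-)\neq\emptyset$, and for each $x$ with $G^b(l,u,x)$, $g(l,u,-,x,-)$ is a bijection from $G^a$ onto $G^b(l,u,-)$; $g(l,u,x,y,z)\Rightarrow g(l,u,x,z,y)$; $g(l,u,a,x,y)\wedge g(l,u,b,y,z)\Rightarrow g(l,u,a+b,x,z)$. (14) For $u\in K$, $H^b(u,-)\ne\emptyset$, and for each $x$ with $H^b(u,x)$, $h(u,-,x,-)$ is a bijection from $H^a$ onto $H^b(u,-)$; $h(u,x,y,z)\Rightarrow h(u,x,z,y)$; $h(u,a,x,y)\wedge h(u,b,y,z)\Rightarrow h(u,a+b,x,z)$. (15) If $Q_l(x_0,\dots,x_k)$ then $G^b(c_l,u_i,x_i)$ for some $u_i\in K$ ($i<k$), $H^b(u_k,x_k)$ for some $u_k\in K$, $u_0,\dots,u_k$ are all the $k$-element subsets of some $(k+1)$-element subset of $I$, and $Q_l(x_{\sigma(0)},\dots,x_{\sigma(k-1)},x_k)$ for every permutation $\sigma$ of $k$. (16) If $Q_l(x_0,\dots,x_k)$, $G^b(c_l,u,x_0)$, $H^b(v,x_k)$, $G^b(c_l,u,x_0')$,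 $H^b(v,x_k')$, then $Q_l(x_0',x_1,\dots,x_k)$ iff the $v$-projection via $\pi$ of the unique $a$ with $g(c_l,u,a,x_0,x_0')$ is $0$, and $Q_l(x_0,\dots,x_{k-1},x_k')$ iff the $c_l$-projection via $\rho$ of the unique $a$ with $h(v,a,x_k,x_k')$ is $0$. (17) For $l\in\omega$, $u\in K$, distinct $i_0,\dots,i_{n-1}\in I\setminus u$, with $v^j_1,\dots,v^j_k$ listing the $k$-subsets of $u\cup\{i_j\}$ other than $u$: if $G^b(c_l,v^j_i,x^j_i)$ ($j<n$, $1\le i<k$) and $H^b(v^j_k,y_j)$ ($j<n$), then $\exists x\bigwedge_{j<n}Q_l(x,x^j_1,\dots,x^j_{k-1},y_j)$. $\varphi$ is the $\mathcal{L}_{\omega_1\omega}$ sentence which is the conjunction of $T$ with: $R$ contains only the constants $c_l$, $l\in\omega$; $G^a$ is canonically isomorphic (via $\pi$) to $\coprod_K Z_2$; $H^a$ is canonically isomorphic (via $\rho$) to $\coprod_\omega Z_2$. Solutions: for $M\models T$, $W\subseteq(\omega\times K(M))\cup K(M)$ and $f:W\to M$, $f$ is a solution for $W$ if (i) $(l,u)\in W$ implies $M\models G^b(c_l,u,f(l,u))$; (ii) $u\in W$ implies $M\models H^b(u,f(u))$; (iii) whenever $u_0,\dots,u_k\in K(M)$ are all the $k$-element subsets of some $(k+1)$-element subset of $I(M)$, $(l,u_i)\in W$ for all $i<k$ and $u_k\in W$, then $M\models Q_l(f(l,u_0),\dots,f(l,u_{k-1}),f(u_k))$. $M$ has a solution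 if there is a solution for $(\omega\times K(M))\cup K(M)$. *)

theory Defs
  imports Main "HOL-Combinatorics.Permutations"
begin

text \<open>The universe is univ; all relations are only meaningful on
  elements of the universe. Z2 = {0,1} is represented by bool (False = 0, True = 1),
  addition in Z2 is (\<noteq>) (exclusive or). cz a is the constant c_a for a in Z2,
  cw l is the constant c_l for l in omega. Qr l is the (k+1)-ary predicate Q_l,
  applied to lists of length k+1.\<close>

record 'a Lstr =
  univ :: "'a set"
  Ir :: "'a \<Rightarrow> bool"
  Kr :: "'a \<Rightarrow> bool"
  Rr :: "'a \<Rightarrow> bool"
  Pr :: "'a \<Rightarrow> bool"
  Gar :: "'a \<Rightarrow> bool"
  Har :: "'a \<Rightarrow> bool"
  memr :: "'a \<Rightarrow> 'a \<Rightarrow> bool"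
  Hbr :: "'a \<Rightarrow> 'a \<Rightarrow> bool"
  pir :: "'a \<Rightarrow> 'a \<Rightarrow> 'a \<Rightarrow> bool"
  rhor :: "'a \<Rightarrow> 'a \<Rightarrow> 'a \<Rightarrow> bool"
  plusr :: "'a \<Rightarrow> 'a \<Rightarrow> 'a \<Rightarrow> bool"
  Gbr :: "'a \<Rightarrow> 'a \<Rightarrow> 'a \<Rightarrow> bool"
  hr :: "'a \<Rightarrow> 'a \<Rightarrow> 'a \<Rightarrow> 'a \<Rightarrow> bool"
  gr :: "'a \<Rightarrow> 'a \<Rightarrow> 'a \<Rightarrow> 'a \<Rightarrow> 'a \<Rightarrow> bool"
  Qr :: "nat \<Rightarrow> 'a list \<Rightarrow> bool"
  cz :: "bool \<Rightarrow> 'a"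
  cw :: "nat \<Rightarrow> 'a"

definition Iset :: "'a Lstr \<Rightarrow> 'a set" where
  "Iset M = {x \<in> univ M. Ir M x}"
definition Kset :: "'a Lstr \<Rightarrow> 'a set" where
  "Kset M = {x \<in> univ M. Kr M x}"
definition Rset :: "'a Lstr \<Rightarrow> 'a set" where
  "Rset M = {x \<in> univ M. Rr M x}"
definition Gaset :: "'a Lstr \<Rightarrow> 'a set" where
  "Gaset M = {x \<in> univ M. Gar M x}"
definition Haset :: "'a Lstr \<Rightarrow> 'a set" where
  "Haset M = {x \<in> univ M. Har M x}"
definition Pset :: "'a Lstr \<Rightarrow> 'a set" where
  "Pset M = {x \<in> univ M. Pr M x}"

definition mems :: "'a Lstr \<Rightarrow> 'a \<Rightarrow> 'a set" where
  "mems M u = {i \<in> univ M. memr M i u}"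

definition all_ksubsets :: "nat \<Rightarrow> 'a Lstr \<Rightarrow> (nat \<Rightarrow> 'a) \<Rightarrow> bool" where
  "all_ksubsets k M us \<longleftrightarrow>
     (\<forall>i\<le>k. us i \<in> Kset M) \<and>
     (\<exists>s. s \<subseteq> Iset M \<and> finite s \<and> card s = Suc k \<and>
          bij_betw (\<lambda>i. mems M (us i)) {..k} {t. t \<subseteq> s \<and> card t = k})"

definition projG :: "'a Lstr \<Rightarrow> 'a \<Rightarrow> 'a \<Rightarrow> bool" where
  "projG M u a \<longleftrightarrow> pir M u a (cz M True)"
definition projH :: "'a Lstr \<Rightarrow> 'a \<Rightarrow> 'a \<Rightarrow> bool" where
  "projH M l b \<longleftrightarrow> rhor M l b (cz M True)"

definition is_Z2const :: "'a Lstr \<Rightarrow> 'a \<Rightarrow> bool" where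
  "is_Z2const M z \<longleftrightarrow> z = cz M False \<or> z = cz M True"

definition fin_supp_on :: "'b set \<Rightarrow> ('b \<Rightarrow> bool) set" where
  "fin_supp_on A = {f. finite {x. f x} \<and> {x. f x} \<subseteq> A}"

definition models_T :: "nat \<Rightarrow> 'a Lstr \<Rightarrow> bool" where
  "models_T k M \<longleftrightarrow>
    \<comment> \<open>constants belong to the universe\<close>
    (\<forall>a. cz M a \<in> univ M) \<and> (\<forall>l. cw M l \<in> univ M) \<and>
    \<comment> \<open>(1)\<close>
    infinite (Iset M) \<and>
    (\<forall>i\<in>univ M. \<forall>u\<in>univ M. memr M i u \<longrightarrow> Ir M i \<and> Kr M u) \<and>
    (\<forall>u\<in>Kset M. finite (mems M u) \<and> card (mems M u) = k) \<and>
    (\<forall>u\<in>Kset M. \<forall>v\<in>Kset M. mems M u = mems M v \<longrightarrow> u = v) \<and>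
    (\<forall>s. s \<subseteq> Iset M \<and> finite s \<and> card s = k \<longrightarrow> (\<exists>u\<in>Kset M. mems M u = s)) \<and>
    \<comment> \<open>(2)\<close>
    (\<forall>x\<in>univ M. \<not> (Ir M x \<and> Kr M x) \<and> \<not> (Ir M x \<and> Rr M x) \<and> \<not> (Ir M x \<and> Gar M x)
        \<and> \<not> (Ir M x \<and> Har M x) \<and> \<not> (Kr M x \<and> Rr M x) \<and> \<not> (Kr M x \<and> Gar M x)
        \<and> \<not> (Kr M x \<and> Har M x) \<and> \<not> (Rr M x \<and> Gar M x) \<and> \<not> (Rr M x \<and> Har M x)
        \<and> \<not> (Gar M x \<and> Har M x)) \<and>
    (\<forall>x\<in>univ M. Pr M x \<longleftrightarrow>
        (Ir M x \<or> Kr M x \<or> Rr M x \<or> Gar M x \<or> Har M x \<or> is_Z2const M x)) \<and>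
    \<comment> \<open>(3)\<close>
    (\<forall>l. Rr M (cw M l)) \<and>
    \<comment> \<open>(4)\<close>
    (\<forall>l\<in>univ M. \<forall>u\<in>univ M. \<forall>x\<in>univ M. Gbr M l u x \<longrightarrow> Rr M l \<and> Kr M u) \<and>
    (\<forall>u\<in>univ M. \<forall>x\<in>univ M. Hbr M u x \<longrightarrow> Kr M u) \<and>
    \<comment> \<open>(5)\<close>
    (\<forall>x\<in>univ M. \<not> Pr M x \<longrightarrow>
        (\<exists>l\<in>univ M. \<exists>u\<in>univ M. Gbr M l u x) \<or> (\<exists>u\<in>univ M. Hbr M u x)) \<and>
    (\<forall>l\<in>Rset M. \<forall>u\<in>Kset M. \<forall>v\<in>Kset M. \<forall>x\<in>univ M.
        \<not> (Pr M x \<and> Hbr M u x) \<and> \<not> (Pr M x \<and> Gbr M l v x) \<and> \<not> (Hbr M u x \<and> Gbr M l v x)) \<and>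
    \<comment> \<open>(6)\<close>
    (\<forall>u\<in>univ M. \<forall>a\<in>univ M. \<forall>z\<in>univ M. pir M u a z \<longrightarrow> Kr M u \<and> Gar M a \<and> is_Z2const M z) \<and>
    \<comment> \<open>(7)\<close>
    (\<forall>l\<in>univ M. \<forall>b\<in>univ M. \<forall>z\<in>univ M. rhor M l b z \<longrightarrow> Rr M l \<and> Har M b \<and> is_Z2const M z) \<and>
    \<comment> \<open>(8)\<close>
    (\<forall>l\<in>univ M. \<forall>u\<in>univ M. \<forall>a\<in>univ M. \<forall>v\<in>univ M. \<forall>w\<in>univ M. gr M l u a v w \<longrightarrow>
        Rr M l \<and> Kr M u \<and> Gar M a \<and> Gbr M l u v \<and> Gbr M l u w) \<and>
    \<comment> \<open>(9)\<close>
    (\<forall>u\<in>univ M. \<forall>b\<in>univ M. \<forall>x\<in>univ M. \<forall>y\<in>univ M. hr M u b x y \<longrightarrow>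
        Kr M u \<and> Har M b \<and> Hbr M u x \<and> Hbr M u y) \<and>
    \<comment> \<open>(10)\<close>
    cz M False \<noteq> cz M True \<and>
    (\<forall>a b. \<forall>z\<in>univ M. plusr M (cz M a) (cz M b) z \<longleftrightarrow> z = cz M (a \<noteq> b)) \<and>
    \<comment> \<open>(11)\<close>
    (\<forall>u\<in>Kset M. \<forall>a\<in>Gaset M. \<exists>!z. z \<in> univ M \<and> pir M u a z) \<and>
    (\<forall>a\<in>Gaset M. \<forall>a'\<in>Gaset M. (\<forall>u\<in>Kset M. projG M u a = projG M u a') \<longrightarrow> a = a') \<and>
    (\<forall>a\<in>Gaset M. \<forall>b\<in>Gaset M. \<forall>c\<in>Gaset M. plusr M a b c \<longleftrightarrow>
        (\<forall>u\<in>Kset M. projG M u c = (projG M u a \<noteq> projG M u b))) \<and>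
    (\<forall>a\<in>Gaset M. \<forall>b\<in>Gaset M. \<exists>c\<in>Gaset M. plusr M a b c) \<and>
    (\<forall>f\<in>fin_supp_on (Kset M). \<exists>a\<in>Gaset M. \<forall>u\<in>Kset M. projG M u a = f u) \<and>
    \<comment> \<open>(12)\<close>
    (\<forall>l\<in>Rset M. \<forall>b\<in>Haset M. \<exists>!z. z \<in> univ M \<and> rhor M l b z) \<and>
    (\<forall>b\<in>Haset M. \<forall>b'\<in>Haset M. (\<forall>l\<in>Rset M. projH M l b = projH M l b') \<longrightarrow> b = b') \<and>
    (\<forall>a\<in>Haset M. \<forall>b\<in>Haset M. \<forall>c\<in>Haset M. plusr M a b c \<longleftrightarrow>
        (\<forall>l\<in>Rset M. projH M l c = (projH M l a \<noteq> projH M l b))) \<and>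
    (\<forall>a\<in>Haset M. \<forall>b\<in>Haset M. \<exists>c\<in>Haset M. plusr M a b c) \<and>
    (\<forall>f\<in>fin_supp_on (Rset M). \<exists>b\<in>Haset M. \<forall>l\<in>Rset M. projH M l b = f l) \<and>
    \<comment> \<open>(13)\<close>
    (\<forall>l\<in>Rset M. \<forall>u\<in>Kset M.
        (\<exists>x\<in>univ M. Gbr M l u x) \<and>
        (\<forall>x\<in>univ M. Gbr M l u x \<longrightarrow>
            (\<forall>a\<in>Gaset M. \<exists>!y. y \<in> univ M \<and> gr M l u a x y) \<and>
            (\<forall>y\<in>univ M. Gbr M l u y \<longrightarrow> (\<exists>!a. a \<in> Gaset M \<and> gr M l u a x y)))) \<and>
    (\<forall>l\<in>univ M. \<forall>u\<in>univ M. \<forall>x\<in>univ M. \<forall>y\<in>univ M. \<forall>z\<in>univ M.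
        gr M l u x y z \<longrightarrow> gr M l u x z y) \<and>
    (\<forall>l\<in>univ M. \<forall>u\<in>univ M. \<forall>a\<in>univ M. \<forall>b\<in>univ M. \<forall>x\<in>univ M. \<forall>y\<in>univ M. \<forall>z\<in>univ M.
        gr M l u a x y \<and> gr M l u b y z \<longrightarrow>
        (\<forall>c\<in>Gaset M. plusr M a b c \<longrightarrow> gr M l u c x z)) \<and>
    \<comment> \<open>(14)\<close>
    (\<forall>u\<in>Kset M.
        (\<exists>x\<in>univ M. Hbr M u x) \<and>
        (\<forall>x\<in>univ M. Hbr M u x \<longrightarrow>
            (\<forall>b\<in>Haset M. \<exists>!y. y \<in> univ M \<and> hr M u b x y) \<and>
            (\<forall>y\<in>univ M. Hbr M u y \<longrightarrow> (\<exists>!b. b \<in> Haset M \<and> hr M u b x y)))) \<and>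
    (\<forall>u\<in>univ M. \<forall>x\<in>univ M. \<forall>y\<in>univ M. \<forall>z\<in>univ M. hr M u x y z \<longrightarrow> hr M u x z y) \<and>
    (\<forall>u\<in>univ M. \<forall>a\<in>univ M. \<forall>b\<in>univ M. \<forall>x\<in>univ M. \<forall>y\<in>univ M. \<forall>z\<in>univ M.
        hr M u a x y \<and> hr M u b y z \<longrightarrow>
        (\<forall>c\<in>Haset M. plusr M a b c \<longrightarrow> hr M u c x z)) \<and>
    \<comment> \<open>(15)\<close>
    (\<forall>l xs. length xs = Suc k \<and> set xs \<subseteq> univ M \<and> Qr M l xs \<longrightarrow>
        (\<exists>us. all_ksubsets k M us \<and>
              (\<forall>i<k. Gbr M (cw M l) (us i) (xs ! i)) \<and> Hbr M (us k) (xs ! k)) \<and>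
        (\<forall>\<sigma>. \<sigma> permutes {..<k} \<longrightarrow>
              Qr M l (map (\<lambda>i. xs ! \<sigma> i) [0..<k] @ [xs ! k]))) \<and>
    \<comment> \<open>(16)\<close>
    (\<forall>l xs u v x0' xk'. length xs = Suc k \<and> set xs \<subseteq> univ M \<and> u \<in> univ M \<and> v \<in> univ M
        \<and> x0' \<in> univ M \<and> xk' \<in> univ M \<and> Qr M l xs
        \<and> Gbr M (cw M l) u (xs ! 0) \<and> Hbr M v (xs ! k)
        \<and> Gbr M (cw M l) u x0' \<and> Hbr M v xk' \<longrightarrow>
        (\<forall>a\<in>univ M. gr M (cw M l) u a (xs ! 0) x0' \<longrightarrow>
            (Qr M l (x0' # tl xs) \<longleftrightarrow> pir M v a (cz M False))) \<and>
        (\<forall>b\<in>univ M. hr M v b (xs ! k) xk' \<longrightarrow>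
            (Qr M l (butlast xs @ [xk']) \<longleftrightarrow> rhor M (cw M l) b (cz M False)))) \<and>
    \<comment> \<open>(17)\<close>
    (\<forall>l. \<forall>u\<in>Kset M. \<forall>n. \<forall>i :: nat \<Rightarrow> 'a. \<forall>v :: nat \<Rightarrow> nat \<Rightarrow> 'a.
        \<forall>x :: nat \<Rightarrow> nat \<Rightarrow> 'a. \<forall>y :: nat \<Rightarrow> 'a.
        inj_on i {..<n} \<and> (\<forall>j<n. i j \<in> Iset M \<and> i j \<notin> mems M u) \<and>
        (\<forall>j<n. bij_betw (v j) {1..k}
             {w \<in> Kset M. mems M w \<subseteq> insert (i j) (mems M u) \<and> w \<noteq> u}) \<and>
        (\<forall>j<n. \<forall>m. 1 \<le> m \<and> m < k \<longrightarrow> x j m \<in> univ M \<and> Gbr M (cw M l) (v j m) (x j m)) \<and>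
        (\<forall>j<n. y j \<in> univ M \<and> Hbr M (v j k) (y j)) \<longrightarrow>
        (\<exists>z\<in>univ M. \<forall>j<n. Qr M l (z # map (x j) [1..<k] @ [y j])))"

definition models_phi :: "nat \<Rightarrow> 'a Lstr \<Rightarrow> bool" where
  "models_phi k M \<longleftrightarrow> models_T k M \<and>
    (\<forall>x\<in>Rset M. \<exists>l. x = cw M l) \<and>
    bij_betw (\<lambda>a u. u \<in> Kset M \<and> projG M u a) (Gaset M) (fin_supp_on (Kset M)) \<and>
    bij_betw (\<lambda>b l. projH M (cw M l) b) (Haset M) (fin_supp_on (UNIV :: nat set))"

definition substructure :: "nat \<Rightarrow> 'a Lstr \<Rightarrow> 'a Lstr \<Rightarrow> bool" where
  "substructure k M N \<longleftrightarrow>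
    univ M \<subseteq> univ N \<and> cz M = cz N \<and> cw M = cw N \<and>
    (\<forall>x\<in>univ M. Ir M x = Ir N x \<and> Kr M x = Kr N x \<and> Rr M x = Rr N x \<and> Pr M x = Pr N x
       \<and> Gar M x = Gar N x \<and> Har M x = Har N x) \<and>
    (\<forall>x\<in>univ M. \<forall>y\<in>univ M. memr M x y = memr N x y \<and> Hbr M x y = Hbr N x y) \<and>
    (\<forall>x\<in>univ M. \<forall>y\<in>univ M. \<forall>z\<in>univ M. pir M x y z = pir N x y z \<and> rhor M x y z = rhor N x y z
       \<and> plusr M x y z = plusr N x y z \<and> Gbr M x y z = Gbr N x y z) \<and>
    (\<forall>x\<in>univ M. \<forall>y\<in>univ M. \<forall>z\<in>univ M. \<forall>w\<in>univ M. hr M x y z w = hr N x y z w) \<and>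
    (\<forall>x\<in>univ M. \<forall>y\<in>univ M. \<forall>z\<in>univ M. \<forall>w\<in>univ M. \<forall>t\<in>univ M. gr M x y z w t = gr N x y z w t) \<and>
    (\<forall>l xs. length xs = Suc k \<and> set xs \<subseteq> univ M \<longrightarrow> Qr M l xs = Qr N l xs)"

text \<open>Index set (omega x K(M)) \<union> K(M), as a disjoint sum: Inl (l,u) and Inr u.\<close>
definition full_index :: "'a Lstr \<Rightarrow> ((nat \<times> 'a) + 'a) set" where
  "full_index M = {Inl (l, u) | l u. u \<in> Kset M} \<union> {Inr u | u. u \<in> Kset M}"

definition is_solution :: "nat \<Rightarrow> 'a Lstr \<Rightarrow> ((nat \<times> 'a) + 'a) set \<Rightarrow> ((nat \<times> 'a) + 'a \<Rightarrow> 'a) \<Rightarrow> bool" where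
  "is_solution k M W f \<longleftrightarrow>
     W \<subseteq> full_index M \<and>
     (\<forall>w\<in>W. f w \<in> univ M) \<and>
     (\<forall>l u. Inl (l, u) \<in> W \<longrightarrow> Gbr M (cw M l) u (f (Inl (l, u)))) \<and>
     (\<forall>u. Inr u \<in> W \<longrightarrow> Hbr M u (f (Inr u))) \<and>
     (\<forall>us l. all_ksubsets k M us \<and> (\<forall>i<k. Inl (l, us i) \<in> W) \<and> Inr (us k) \<in> W \<longrightarrow>
        Qr M l (map (\<lambda>i. f (Inl (l, us i))) [0..<k] @ [f (Inr (us k))]))"

definition has_solution :: "nat \<Rightarrow> 'a Lstr \<Rightarrow> bool" where
  "has_solution k M \<longleftrightarrow> (\<exists>f. is_solution k M (full_index M) f)"

end

theory Submission
  imports Defs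
begin

lemma T15: "models_T k M \<Longrightarrow> (\<forall>l xs. length xs = Suc k \<and> set xs \<subseteq> univ M \<and> Qr M l xs \<longrightarrow>
        (\<exists>us. all_ksubsets k M us \<and>
              (\<forall>i<k. Gbr M (cw M l) (us i) (xs ! i)) \<and> Hbr M (us k) (xs ! k)) \<and>
        (\<forall>\<sigma>. \<sigma> permutes {..<k} \<longrightarrow>
              Qr M l (map (\<lambda>i. xs ! \<sigma> i) [0..<k] @ [xs ! k])))"
  unfolding models_T_def by (elim conjE) assumption

lemma T16: "models_T k M \<Longrightarrow> (\<forall>l xs u v x0' xk'. length xs = Suc k \<and> set xs \<subseteq> univ M \<and> u \<in> univ M \<and> v \<in> univ M
        \<and> x0' \<in> univ M \<and> xk' \<in> univ M \<and> Qr M l xs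
        \<and> Gbr M (cw M l) u (xs ! 0) \<and> Hbr M v (xs ! k)
        \<and> Gbr M (cw M l) u x0' \<and> Hbr M v xk' \<longrightarrow>
        (\<forall>a\<in>univ M. gr M (cw M l) u a (xs ! 0) x0' \<longrightarrow>
            (Qr M l (x0' # tl xs) \<longleftrightarrow> pir M v a (cz M False))) \<and>
        (\<forall>b\<in>univ M. hr M v b (xs ! k) xk' \<longrightarrow>
            (Qr M l (butlast xs @ [xk']) \<longleftrightarrow> rhor M (cw M l) b (cz M False))))"
  unfolding models_T_def by (elim conjE) assumption

lemma set_tl_subset: "x \<in> set (tl L) \<Longrightarrow> x \<in> set L" by (cases L) auto

lemma perm_list_nth:
  assumes "length L = Suc k"
  shows "length (map (\<lambda>i. L ! \<sigma> i) [0..<k] @ [L ! k]) = Suc k"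
    and "i < k \<Longrightarrow> (map (\<lambda>i. L ! \<sigma> i) [0..<k] @ [L ! k]) ! i = L ! \<sigma> i"
    and "(map (\<lambda>i. L ! \<sigma> i) [0..<k] @ [L ! k]) ! k = L ! k"
  using assms by (auto simp: nth_append)

lemma flip_all:
  assumes T: "models_T k N" and k: "0 < k"
  and len: "length xs = Suc k" "length xs' = Suc k"
  and sets: "set xs \<subseteq> univ N" "set xs' \<subseteq> univ N"
  and Q: "Qr N l xs"
  and us: "\<forall>i\<le>k. us i \<in> univ N"
  and G: "\<forall>i<k. Gbr N (cw N l) (us i) (xs!i) \<and> Gbr N (cw N l) (us i) (xs'!i)"
  and H: "Hbr N (us k) (xs!k)" "Hbr N (us k) (xs'!k)"
  and A: "\<forall>i<k. \<exists>c\<in>univ N. gr N (cw N l) (us i) c (xs!i) (xs'!i) \<and> pir N (us k) c (cz N False)"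
  and B: "\<exists>b\<in>univ N. hr N (us k) b (xs!k) (xs'!k) \<and> rhor N (cw N l) b (cz N False)"
  shows "Qr N l xs'"
proof -
  note T15 = T15[OF T] and T16 = T16[OF T]
  have inx: "i < Suc k \<Longrightarrow> xs ! i \<in> univ N" for i using sets len by (simp add: subset_iff)
  have inx': "i < Suc k \<Longrightarrow> xs' ! i \<in> univ N" for i using sets len by (simp add: subset_iff)
  define zs where "zs m = map (\<lambda>i. if i < m then xs'!i else xs!i) [0..<k] @ [xs'!k]" for m
  have zlen: "length (zs m) = Suc k" for m by (simp add: zs_def)
  have znth: "i < k \<Longrightarrow> zs m ! i = (if i < m then xs'!i else xs!i)" for i m
    by (simp add: zs_def nth_append)
  have znthk: "zs m ! k = xs'!k" for m by (simp add: zs_def nth_append)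
  have zset: "set (zs m) \<subseteq> univ N" for m
  proof
    fix x assume "x \<in> set (zs m)"
    then obtain i where i: "i < Suc k" "x = zs m ! i" by (metis in_set_conv_nth zlen)
    show "x \<in> univ N"
      using i inx inx' znth znthk by (cases "i = k") auto
  qed
  have z0: "Qr N l (zs 0)"
  proof -
    obtain b where b: "b \<in> univ N" "hr N (us k) b (xs!k) (xs'!k)" "rhor N (cw N l) b (cz N False)"
      using B by blast
    have "Qr N l (butlast xs @ [xs'!k])"
      using T16[rule_format, of xs "us 0" "us k" "xs'!0" "xs'!k" l] len sets us Q G H b inx' k
      by auto
    moreover have "butlast xs @ [xs'!k] = zs 0"
      by (rule nth_equalityI) (auto simp: zlen len nth_append znth znthk nth_butlast less_Suc_eq)
    ultimately show ?thesis by simp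
  qed
  have step: "Qr N l (zs (Suc m))" if m: "m < k" and Qm: "Qr N l (zs m)" for m
  proof -
    define \<sigma> where "\<sigma> = transpose 0 m"
    have sp: "\<sigma> permutes {..<k}" unfolding \<sigma>_def using m k by (intro permutes_swap_id) auto
    define ws where "ws = map (\<lambda>i. zs m ! \<sigma> i) [0..<k] @ [zs m ! k]"
    have wsl: "length ws = Suc k" unfolding ws_def by simp
    have Qw: "Qr N l ws" unfolding ws_def using T15 zlen zset Qm sp by blast
    have ws0: "ws ! 0 = xs ! m" unfolding ws_def using k m by (simp add: nth_append \<sigma>_def znth)
    have wsk: "ws ! k = xs' ! k" unfolding ws_def by (simp add: nth_append znthk)
    have wsi: "i < k \<Longrightarrow> ws ! i = zs m ! \<sigma> i" for i unfolding ws_def by (simp add: nth_append)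
    have wset: "set ws \<subseteq> univ N"
    proof
      fix x assume "x \<in> set ws"
      then obtain i where i: "i < Suc k" "x = ws ! i" by (metis in_set_conv_nth wsl)
      have "\<sigma> i < k" if "i < k" using sp that by (meson lessThan_iff permutes_in_image)
      then show "x \<in> univ N"
        using i zset zlen wsi wsk inx' by (cases "i = k") (auto simp: subset_iff, metis less_SucI nth_mem)
    qed
    obtain c where c: "c \<in> univ N" "gr N (cw N l) (us m) c (xs!m) (xs'!m)" "pir N (us k) c (cz N False)"
      using A m by blast
    have Q2: "Qr N l (xs'!m # tl ws)"
      using T16[rule_format, of ws "us m" "us k" "xs'!m" "xs'!k" l] wsl wset us Q G H c inx' m Qw ws0 wsk
      by auto
    define ws2 where "ws2 = xs'!m # tl ws"
    have ws2l: "length ws2 = Suc k" using wsl by (simp add: ws2_def)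
    have ws2set: "set ws2 \<subseteq> univ N" using wset inx' m
      by (auto simp: ws2_def dest: set_tl_subset)
    have "Qr N l (map (\<lambda>i. ws2 ! \<sigma> i) [0..<k] @ [ws2 ! k])"
      using T15 ws2l ws2set Q2 sp unfolding ws2_def by blast
    moreover have "map (\<lambda>i. ws2 ! \<sigma> i) [0..<k] @ [ws2 ! k] = zs (Suc m)"
    proof (rule nth_equalityI)
      show "length (map (\<lambda>i. ws2 ! \<sigma> i) [0..<k] @ [ws2 ! k]) = length (zs (Suc m))"
        by (simp add: zlen)
      fix i assume "i < length (map (\<lambda>i. ws2 ! \<sigma> i) [0..<k] @ [ws2 ! k])"
      then have i: "i < Suc k" by simp
      show "(map (\<lambda>i. ws2 ! \<sigma> i) [0..<k] @ [ws2 ! k]) ! i = zs (Suc m) ! i"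
      proof (cases "i = k")
        case True
        then show ?thesis using k wsl wsk znthk
          by (simp add: nth_append ws2_def nth_tl)
      next
        case False
        then have ik: "i < k" using i by simp
        have sik: "\<sigma> i < k" using sp ik by (meson lessThan_iff permutes_in_image)
        have ss: "\<sigma> (\<sigma> i) = i" unfolding \<sigma>_def by simp
        show ?thesis
        proof (cases "i = m")
          case True
          then show ?thesis using ik by (simp add: nth_append ws2_def \<sigma>_def znth)
        next
          case False
          then have "\<sigma> i \<noteq> 0" unfolding \<sigma>_def by (auto simp: transpose_def)
          then have "ws2 ! \<sigma> i = ws ! \<sigma> i" unfolding ws2_def using sik wsl
            by (cases "\<sigma> i") (auto simp: nth_tl)
          also have "\<dots> = zs m ! i" using wsi sik ss by simp
          finally show ?thesis using ik False by (simp add: nth_append znth)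
        qed
      qed
    qed
    ultimately show ?thesis by simp
  qed
  have "m \<le> k \<Longrightarrow> Qr N l (zs m)" for m
  proof (induction m)
    case 0 then show ?case using z0 by simp
  next
    case (Suc m) then show ?case using step by simp
  qed
  then have "Qr N l (zs k)" by simp
  moreover have "zs k = xs'"
    by (rule nth_equalityI) (auto simp: zlen len znth znthk less_Suc_eq)
  ultimately show ?thesis by simp
qed

lemma Tcz: "models_T k M \<Longrightarrow> (\<forall>a. cz M a \<in> univ M)" unfolding models_T_def by (elim conjE) assumption
lemma Tcw: "models_T k M \<Longrightarrow> (\<forall>l. cw M l \<in> univ M)" unfolding models_T_def by (elim conjE) assumption
lemma Tcard: "models_T k M \<Longrightarrow> (\<forall>u\<in>Kset M. finite (mems M u) \<and> card (mems M u) = k)" unfolding models_T_def by (elim conjE) assumption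
lemma TR: "models_T k M \<Longrightarrow> (\<forall>l. Rr M (cw M l))" unfolding models_T_def by (elim conjE) assumption
lemma T6: "models_T k M \<Longrightarrow> (\<forall>u\<in>univ M. \<forall>a\<in>univ M. \<forall>z\<in>univ M. pir M u a z \<longrightarrow> Kr M u \<and> Gar M a \<and> is_Z2const M z)" unfolding models_T_def by (elim conjE) assumption
lemma T7: "models_T k M \<Longrightarrow> (\<forall>l\<in>univ M. \<forall>b\<in>univ M. \<forall>z\<in>univ M. rhor M l b z \<longrightarrow> Rr M l \<and> Har M b \<and> is_Z2const M z)" unfolding models_T_def by (elim conjE) assumption
lemma T8: "models_T k M \<Longrightarrow> (\<forall>l\<in>univ M. \<forall>u\<in>univ M. \<forall>a\<in>univ M. \<forall>v\<in>univ M. \<forall>w\<in>univ M. gr M l u a v w \<longrightarrow>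
        Rr M l \<and> Kr M u \<and> Gar M a \<and> Gbr M l u v \<and> Gbr M l u w)" unfolding models_T_def by (elim conjE) assumption
lemma T9: "models_T k M \<Longrightarrow> (\<forall>u\<in>univ M. \<forall>b\<in>univ M. \<forall>x\<in>univ M. \<forall>y\<in>univ M. hr M u b x y \<longrightarrow>
        Kr M u \<and> Har M b \<and> Hbr M u x \<and> Hbr M u y)" unfolding models_T_def by (elim conjE) assumption
lemma T11a: "models_T k M \<Longrightarrow> (\<forall>u\<in>Kset M. \<forall>a\<in>Gaset M. \<exists>!z. z \<in> univ M \<and> pir M u a z)" unfolding models_T_def by (elim conjE) assumption
lemma T11c: "models_T k M \<Longrightarrow> (\<forall>a\<in>Gaset M. \<forall>b\<in>Gaset M. \<forall>c\<in>Gaset M. plusr M a b c \<longleftrightarrow>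
        (\<forall>u\<in>Kset M. projG M u c = (projG M u a \<noteq> projG M u b)))" unfolding models_T_def by (elim conjE) assumption
lemma T11d: "models_T k M \<Longrightarrow> (\<forall>a\<in>Gaset M. \<forall>b\<in>Gaset M. \<exists>c\<in>Gaset M. plusr M a b c)" unfolding models_T_def by (elim conjE) assumption
lemma T11e: "models_T k M \<Longrightarrow> (\<forall>f\<in>fin_supp_on (Kset M). \<exists>a\<in>Gaset M. \<forall>u\<in>Kset M. projG M u a = f u)" unfolding models_T_def by (elim conjE) assumption
lemma T12a: "models_T k M \<Longrightarrow> (\<forall>l\<in>Rset M. \<forall>b\<in>Haset M. \<exists>!z. z \<in> univ M \<and> rhor M l b z)" unfolding models_T_def by (elim conjE) assumption
lemma T12c: "models_T k M \<Longrightarrow> (\<forall>a\<in>Haset M. \<forall>b\<in>Haset M. \<forall>c\<in>Haset M. plusr M a b c \<longleftrightarrow>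
        (\<forall>l\<in>Rset M. projH M l c = (projH M l a \<noteq> projH M l b)))" unfolding models_T_def by (elim conjE) assumption
lemma T12d: "models_T k M \<Longrightarrow> (\<forall>a\<in>Haset M. \<forall>b\<in>Haset M. \<exists>c\<in>Haset M. plusr M a b c)" unfolding models_T_def by (elim conjE) assumption
lemma T12e: "models_T k M \<Longrightarrow> (\<forall>f\<in>fin_supp_on (Rset M). \<exists>b\<in>Haset M. \<forall>l\<in>Rset M. projH M l b = f l)" unfolding models_T_def by (elim conjE) assumption
lemma T13a: "models_T k M \<Longrightarrow> (\<forall>l\<in>Rset M. \<forall>u\<in>Kset M.
        (\<exists>x\<in>univ M. Gbr M l u x) \<and>
        (\<forall>x\<in>univ M. Gbr M l u x \<longrightarrow>
            (\<forall>a\<in>Gaset M. \<exists>!y. y \<in> univ M \<and> gr M l u a x y) \<and>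
            (\<forall>y\<in>univ M. Gbr M l u y \<longrightarrow> (\<exists>!a. a \<in> Gaset M \<and> gr M l u a x y))))" unfolding models_T_def by (elim conjE) assumption
lemma T13c: "models_T k M \<Longrightarrow> (\<forall>l\<in>univ M. \<forall>u\<in>univ M. \<forall>a\<in>univ M. \<forall>b\<in>univ M. \<forall>x\<in>univ M. \<forall>y\<in>univ M. \<forall>z\<in>univ M.
        gr M l u a x y \<and> gr M l u b y z \<longrightarrow>
        (\<forall>c\<in>Gaset M. plusr M a b c \<longrightarrow> gr M l u c x z))" unfolding models_T_def by (elim conjE) assumption
lemma T14a: "models_T k M \<Longrightarrow> (\<forall>u\<in>Kset M.
        (\<exists>x\<in>univ M. Hbr M u x) \<and>
        (\<forall>x\<in>univ M. Hbr M u x \<longrightarrow>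
            (\<forall>b\<in>Haset M. \<exists>!y. y \<in> univ M \<and> hr M u b x y) \<and>
            (\<forall>y\<in>univ M. Hbr M u y \<longrightarrow> (\<exists>!b. b \<in> Haset M \<and> hr M u b x y))))" unfolding models_T_def by (elim conjE) assumption
lemma T14c: "models_T k M \<Longrightarrow> (\<forall>u\<in>univ M. \<forall>a\<in>univ M. \<forall>b\<in>univ M. \<forall>x\<in>univ M. \<forall>y\<in>univ M. \<forall>z\<in>univ M.
        hr M u a x y \<and> hr M u b y z \<longrightarrow>
        (\<forall>c\<in>Haset M. plusr M a b c \<longrightarrow> hr M u c x z))" unfolding models_T_def by (elim conjE) assumption

lemma zero_pir:
  assumes T: "models_T k N" and v: "v \<in> Kset N" and c: "c \<in> Gaset N" and np: "\<not> projG N v c"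
  shows "pir N v c (cz N False)"
proof -
  obtain z where z: "z \<in> univ N" "pir N v c z" using T11a[OF T] v c by blast
  have "is_Z2const N z" using T6[OF T] z v c by (auto simp: Kset_def Gaset_def)
  then show ?thesis using z np by (auto simp: is_Z2const_def projG_def)
qed

lemma zero_rho:
  assumes T: "models_T k N" and v: "r \<in> Rset N" and c: "c \<in> Haset N" and np: "\<not> projH N r c"
  shows "rhor N r c (cz N False)"
proof -
  obtain z where z: "z \<in> univ N" "rhor N r c z" using T12a[OF T] v c by blast
  have "is_Z2const N z" using T7[OF T] z v c by (auto simp: Rset_def Haset_def)
  then show ?thesis using z np by (auto simp: is_Z2const_def projH_def)
qed

lemma sub_all:
  assumes "substructure k M N"
  shows "univ M \<subseteq> univ N \<and> cz M = cz N \<and> cw M = cw N \<and>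
    (\<forall>x\<in>univ M. Ir M x = Ir N x \<and> Kr M x = Kr N x \<and> Rr M x = Rr N x \<and> Pr M x = Pr N x
       \<and> Gar M x = Gar N x \<and> Har M x = Har N x) \<and>
    (\<forall>x\<in>univ M. \<forall>y\<in>univ M. memr M x y = memr N x y \<and> Hbr M x y = Hbr N x y) \<and>
    (\<forall>x\<in>univ M. \<forall>y\<in>univ M. \<forall>z\<in>univ M. pir M x y z = pir N x y z \<and> rhor M x y z = rhor N x y z
       \<and> plusr M x y z = plusr N x y z \<and> Gbr M x y z = Gbr N x y z) \<and>
    (\<forall>x\<in>univ M. \<forall>y\<in>univ M. \<forall>z\<in>univ M. \<forall>w\<in>univ M. hr M x y z w = hr N x y z w) \<and>
    (\<forall>x\<in>univ M. \<forall>y\<in>univ M. \<forall>z\<in>univ M. \<forall>w\<in>univ M. \<forall>t\<in>univ M. gr M x y z w t = gr N x y z w t) \<and>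
    (\<forall>l xs. length xs = Suc k \<and> set xs \<subseteq> univ M \<longrightarrow> Qr M l xs = Qr N l xs)"
  using assms unfolding substructure_def .

lemma sub_facts:
  assumes "substructure k M N"
  shows "univ M \<subseteq> univ N" "cz M = cz N" "cw M = cw N"
    "\<And>x. x\<in>univ M \<Longrightarrow> Ir M x = Ir N x \<and> Kr M x = Kr N x \<and> Rr M x = Rr N x \<and> Pr M x = Pr N x
       \<and> Gar M x = Gar N x \<and> Har M x = Har N x"
    "\<And>x y. x\<in>univ M \<Longrightarrow> y\<in>univ M \<Longrightarrow> memr M x y = memr N x y \<and> Hbr M x y = Hbr N x y"
    "\<And>x y z. x\<in>univ M \<Longrightarrow> y\<in>univ M \<Longrightarrow> z\<in>univ M \<Longrightarrow> pir M x y z = pir N x y z \<and> rhor M x y z = rhor N x y z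
       \<and> plusr M x y z = plusr N x y z \<and> Gbr M x y z = Gbr N x y z"
    "\<And>x y z w. x\<in>univ M \<Longrightarrow> y\<in>univ M \<Longrightarrow> z\<in>univ M \<Longrightarrow> w\<in>univ M \<Longrightarrow> hr M x y z w = hr N x y z w"
    "\<And>x y z w t. x\<in>univ M \<Longrightarrow> y\<in>univ M \<Longrightarrow> z\<in>univ M \<Longrightarrow> w\<in>univ M \<Longrightarrow> t\<in>univ M \<Longrightarrow> gr M x y z w t = gr N x y z w t"
    "\<And>l xs. length xs = Suc k \<Longrightarrow> set xs \<subseteq> univ M \<Longrightarrow> Qr M l xs = Qr N l xs"
proof -
  note A = sub_all[OF assms]
  have A1: "univ M \<subseteq> univ N" using A by (elim conjE)
  have A2: "cz M = cz N" using A by (elim conjE)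
  have A3: "cw M = cw N" using A by (elim conjE)
  have A4: "\<forall>x\<in>univ M. Ir M x = Ir N x \<and> Kr M x = Kr N x \<and> Rr M x = Rr N x \<and> Pr M x = Pr N x
       \<and> Gar M x = Gar N x \<and> Har M x = Har N x" using A by (elim conjE)
  have A5: "\<forall>x\<in>univ M. \<forall>y\<in>univ M. memr M x y = memr N x y \<and> Hbr M x y = Hbr N x y" using A by (elim conjE)
  have A6: "\<forall>x\<in>univ M. \<forall>y\<in>univ M. \<forall>z\<in>univ M. pir M x y z = pir N x y z \<and> rhor M x y z = rhor N x y z
       \<and> plusr M x y z = plusr N x y z \<and> Gbr M x y z = Gbr N x y z" using A by (elim conjE)
  have A7: "\<forall>x\<in>univ M. \<forall>y\<in>univ M. \<forall>z\<in>univ M. \<forall>w\<in>univ M. hr M x y z w = hr N x y z w" using A by (elim conjE)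
  have A8: "\<forall>x\<in>univ M. \<forall>y\<in>univ M. \<forall>z\<in>univ M. \<forall>w\<in>univ M. \<forall>t\<in>univ M. gr M x y z w t = gr N x y z w t" using A by (elim conjE)
  have A9: "\<forall>l xs. length xs = Suc k \<and> set xs \<subseteq> univ M \<longrightarrow> Qr M l xs = Qr N l xs" using A by (elim conjE)
  show "univ M \<subseteq> univ N" by (rule A1)
  show "cz M = cz N" by (rule A2)
  show "cw M = cw N" by (rule A3)
  show "\<And>x. x\<in>univ M \<Longrightarrow> Ir M x = Ir N x \<and> Kr M x = Kr N x \<and> Rr M x = Rr N x \<and> Pr M x = Pr N x
       \<and> Gar M x = Gar N x \<and> Har M x = Har N x" by (rule A4[rule_format])
  show "\<And>x y. x\<in>univ M \<Longrightarrow> y\<in>univ M \<Longrightarrow> memr M x y = memr N x y \<and> Hbr M x y = Hbr N x y"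
    by (rule A5[rule_format])
  show "\<And>x y z. x\<in>univ M \<Longrightarrow> y\<in>univ M \<Longrightarrow> z\<in>univ M \<Longrightarrow> pir M x y z = pir N x y z \<and> rhor M x y z = rhor N x y z
       \<and> plusr M x y z = plusr N x y z \<and> Gbr M x y z = Gbr N x y z"
    by (rule A6[rule_format])
  show "\<And>x y z w. x\<in>univ M \<Longrightarrow> y\<in>univ M \<Longrightarrow> z\<in>univ M \<Longrightarrow> w\<in>univ M \<Longrightarrow> hr M x y z w = hr N x y z w"
    by (rule A7[rule_format])
  show "\<And>x y z w t. x\<in>univ M \<Longrightarrow> y\<in>univ M \<Longrightarrow> z\<in>univ M \<Longrightarrow> w\<in>univ M \<Longrightarrow> t\<in>univ M \<Longrightarrow> gr M x y z w t = gr N x y z w t"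
    by (rule A8[rule_format])
  show "\<And>l xs. length xs = Suc k \<Longrightarrow> set xs \<subseteq> univ M \<Longrightarrow> Qr M l xs = Qr N l xs"
    using A9 by blast
qed

lemma fixG:
  assumes PM: "models_phi k M" and PN: "models_phi k N" and S: "substructure k M N"
    and u: "u \<in> Kset M" and x: "x \<in> univ N" and xG: "Gbr N (cw N l) u x"
  shows "\<exists>y. y \<in> univ M \<and> Gbr M (cw M l) u y \<and>
           (\<exists>c\<in>univ N. gr N (cw N l) u c x y \<and> (\<forall>v\<in>Kset M. pir N v c (cz N False)))"
proof -
  have TM: "models_T k M" and TN: "models_T k N" using PM PN by (auto simp: models_phi_def)
  note sf = sub_facts[OF S]
  have uM: "u \<in> univ M" using u by (simp add: Kset_def)
  have uN: "u \<in> Kset N" using u sf(1,4) by (auto simp: Kset_def)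
  have lM: "cw M l \<in> Rset M" using Tcw[OF TM] TR[OF TM] by (simp add: Rset_def)
  have lN: "cw N l \<in> Rset N" using Tcw[OF TN] TR[OF TN] by (simp add: Rset_def)
  have clM: "cw M l \<in> univ M" using lM by (simp add: Rset_def)
  obtain xM where xM: "xM \<in> univ M" "Gbr M (cw M l) u xM" using T13a[OF TM] lM u by blast
  have xMN: "Gbr N (cw N l) u xM" using xM sf(6)[OF clM uM xM(1)] sf(3) by simp
  have xMu: "xM \<in> univ N" using xM sf(1) by blast
  obtain a where a: "a \<in> Gaset N" "gr N (cw N l) u a x xM"
    using T13a[OF TN] lN uN x xG xMN xMu by blast
  define \<phi> where "\<phi> v = (v \<in> Kset M \<and> projG N v a)" for v
  have "(\<lambda>v. v \<in> Kset N \<and> projG N v a) \<in> fin_supp_on (Kset N)"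
    using PN a(1) unfolding models_phi_def by (meson bij_betwE)
  then have fin: "finite {v. v \<in> Kset N \<and> projG N v a}" by (simp add: fin_supp_on_def)
  have KMN: "Kset M \<subseteq> Kset N" using sf(1,4) by (auto simp: Kset_def)
  have "{v. \<phi> v} \<subseteq> {v. v \<in> Kset N \<and> projG N v a}" using KMN by (auto simp: \<phi>_def)
  then have "finite {v. \<phi> v}" using fin by (rule finite_subset)
  then have "\<phi> \<in> fin_supp_on (Kset M)" by (auto simp: fin_supp_on_def \<phi>_def[abs_def])
  then obtain a' where a': "a' \<in> Gaset M" "\<forall>v\<in>Kset M. projG M v a' = \<phi> v" using T11e[OF TM] by blast
  have a'M: "a' \<in> univ M" using a' by (simp add: Gaset_def)
  obtain y where y: "y \<in> univ M" "gr M (cw M l) u a' xM y" using T13a[OF TM] lM u xM a'(1) by blast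
  have yG: "Gbr M (cw M l) u y" using T8[OF TM] clM uM a'M xM(1) y by blast
  have yN: "gr N (cw N l) u a' xM y" using sf(8)[OF clM uM a'M xM(1) y(1)] y(2) sf(3) by simp
  have a'N: "a' \<in> Gaset N" using a'M a'(1) sf(1,4) by (auto simp: Gaset_def)
  obtain c where c: "c \<in> Gaset N" "plusr N a a' c" using T11d[OF TN] a(1) a'N by blast
  have aU: "a \<in> univ N" "a' \<in> univ N" "c \<in> univ N" using a(1) a'N c(1) by (auto simp: Gaset_def)
  have yU: "y \<in> univ N" using y sf(1) by blast
  have clN: "cw N l \<in> univ N" using lN by (simp add: Rset_def)
  have uU: "u \<in> univ N" using uN by (simp add: Kset_def)
  have gc: "gr N (cw N l) u c x y"
    by (rule T13c[OF TN, rule_format, OF clN uU aU(1) aU(2) x xMu yU conjI[OF a(2) yN] c(1) c(2)])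
  have pc: "\<forall>v\<in>Kset N. projG N v c = (projG N v a \<noteq> projG N v a')"
    using T11c[OF TN] a(1) a'N c by blast
  have "\<forall>v\<in>Kset M. pir N v c (cz N False)"
  proof
    fix v assume v: "v \<in> Kset M"
    have vM: "v \<in> univ M" using v by (simp add: Kset_def)
    have czM: "cz M True \<in> univ M" using Tcz[OF TM] by simp
    have "projG N v a' = projG M v a'"
      using sf(6)[OF vM a'M czM] sf(2) by (simp add: projG_def)
    also have "\<dots> = projG N v a" using a'(2) v by (simp add: \<phi>_def)
    finally have "\<not> projG N v c" using pc v KMN by auto
    then show "pir N v c (cz N False)" using zero_pir[OF TN _ c(1)] v KMN by blast
  qed
  then show ?thesis using y(1) yG gc aU(3) by blast
qed

lemma fixH:
  assumes PM: "models_phi k M" and PN: "models_phi k N" and S: "substructure k M N"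
    and u: "u \<in> Kset M" and x: "x \<in> univ N" and xH: "Hbr N u x"
  shows "\<exists>y. y \<in> univ M \<and> Hbr M u y \<and>
           (\<exists>c\<in>univ N. hr N u c x y \<and> (\<forall>l. rhor N (cw N l) c (cz N False)))"
proof -
  have TM: "models_T k M" and TN: "models_T k N" using PM PN by (auto simp: models_phi_def)
  note sf = sub_facts[OF S]
  have uM: "u \<in> univ M" using u by (simp add: Kset_def)
  have uN: "u \<in> Kset N" using u sf(1,4) by (auto simp: Kset_def)
  obtain xM where xM: "xM \<in> univ M" "Hbr M u xM" using T14a[OF TM] u by blast
  have xMN: "Hbr N u xM" using xM sf(5)[OF uM xM(1)] by simp
  have xMu: "xM \<in> univ N" using xM sf(1) by blast
  obtain b where b: "b \<in> Haset N" "hr N u b x xM"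
    using T14a[OF TN] uN x xH xMN xMu by blast
  define \<psi> where "\<psi> r = (r \<in> Rset M \<and> projH N r b)" for r
  have "(\<lambda>l. projH N (cw N l) b) \<in> fin_supp_on UNIV"
    using PN b(1) unfolding models_phi_def by (meson bij_betwE)
  then have fin: "finite {l. projH N (cw N l) b}" by (simp add: fin_supp_on_def)
  have RM: "\<forall>r\<in>Rset M. \<exists>l. r = cw M l" using PM by (simp add: models_phi_def)
  have "{r. \<psi> r} \<subseteq> cw N ` {l. projH N (cw N l) b}" using RM sf(3) by (auto simp: \<psi>_def)
  then have "finite {r. \<psi> r}" using finite_imageI[OF fin] by (rule finite_subset)
  then have "\<psi> \<in> fin_supp_on (Rset M)" by (auto simp: fin_supp_on_def \<psi>_def[abs_def])
  then obtain b' where b': "b' \<in> Haset M" "\<forall>r\<in>Rset M. projH M r b' = \<psi> r" using T12e[OF TM] by blast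
  have b'M: "b' \<in> univ M" using b' by (simp add: Haset_def)
  obtain y where y: "y \<in> univ M" "hr M u b' xM y" using T14a[OF TM] u xM b'(1) by blast
  have yH: "Hbr M u y" using T9[OF TM] uM b'M xM(1) y by blast
  have yN: "hr N u b' xM y" using sf(7)[OF uM b'M xM(1) y(1)] y(2) by simp
  have b'N: "b' \<in> Haset N" using b'M b'(1) sf(1,4) by (auto simp: Haset_def)
  obtain c where c: "c \<in> Haset N" "plusr N b b' c" using T12d[OF TN] b(1) b'N by blast
  have bU: "b \<in> univ N" "b' \<in> univ N" "c \<in> univ N" using b(1) b'N c(1) by (auto simp: Haset_def)
  have yU: "y \<in> univ N" using y sf(1) by blast
  have uU: "u \<in> univ N" using uN by (simp add: Kset_def)
  have hc: "hr N u c x y"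
    by (rule T14c[OF TN, rule_format, OF uU bU(1) bU(2) x xMu yU conjI[OF b(2) yN] c(1) c(2)])
  have pc: "\<forall>r\<in>Rset N. projH N r c = (projH N r b \<noteq> projH N r b')"
    using T12c[OF TN] b(1) b'N c by blast
  have "\<forall>l. rhor N (cw N l) c (cz N False)"
  proof
    fix l
    have lM: "cw M l \<in> Rset M" using Tcw[OF TM] TR[OF TM] by (simp add: Rset_def)
    have lN: "cw N l \<in> Rset N" using Tcw[OF TN] TR[OF TN] by (simp add: Rset_def)
    have clM: "cw M l \<in> univ M" using lM by (simp add: Rset_def)
    have czM: "cz M True \<in> univ M" using Tcz[OF TM] by simp
    have "projH N (cw N l) b' = projH M (cw M l) b'"
      using sf(6)[OF clM b'M czM] sf(2,3) by (simp add: projH_def)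
    also have "\<dots> = projH N (cw N l) b" using b'(2) lM sf(3) by (simp add: \<psi>_def)
    finally have "\<not> projH N (cw N l) c" using pc lN by auto
    then show "rhor N (cw N l) c (cz N False)" using zero_rho[OF TN lN c(1)] by blast
  qed
  then show ?thesis using y(1) yH hc bU(3) by blast
qed

lemma mems_eq:
  assumes PM: "models_phi k M" and PN: "models_phi k N" and S: "substructure k M N"
    and u: "u \<in> Kset M"
  shows "mems M u = mems N u"
proof -
  have TM: "models_T k M" and TN: "models_T k N" using PM PN by (auto simp: models_phi_def)
  note sf = sub_facts[OF S]
  have uM: "u \<in> univ M" using u by (simp add: Kset_def)
  have uN: "u \<in> Kset N" using u sf(1,4) by (auto simp: Kset_def)
  have sub: "mems M u \<subseteq> mems N u" using sf(1,5) uM by (auto simp: mems_def)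
  have cM: "finite (mems M u)" "card (mems M u) = k" using Tcard[OF TM] u by auto
  have cN: "finite (mems N u)" "card (mems N u) = k" using Tcard[OF TN] uN by auto
  show ?thesis using card_subset_eq[OF cN(1) sub] cM cN by simp
qed

lemma ksub_transfer:
  assumes PM: "models_phi k M" and PN: "models_phi k N" and S: "substructure k M N"
    and A: "all_ksubsets k M us"
  shows "all_ksubsets k N us"
proof -
  note sf = sub_facts[OF S]
  have KMN: "Kset M \<subseteq> Kset N" using sf(1,4) by (auto simp: Kset_def)
  have IMN: "Iset M \<subseteq> Iset N" using sf(1,4) by (auto simp: Iset_def)
  have usK: "\<forall>i\<le>k. us i \<in> Kset M" using A by (simp add: all_ksubsets_def)
  obtain s where s: "s \<subseteq> Iset M" "finite s" "card s = Suc k"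
    "bij_betw (\<lambda>i. mems M (us i)) {..k} {t. t \<subseteq> s \<and> card t = k}"
    using A unfolding all_ksubsets_def by blast
  have "bij_betw (\<lambda>i. mems N (us i)) {..k} {t. t \<subseteq> s \<and> card t = k}"
    using s(4) by (rule bij_betw_cong[THEN iffD1, rotated])
      (use mems_eq[OF PM PN S] usK in auto)
  then show ?thesis unfolding all_ksubsets_def using usK KMN s IMN by blast
qed

theorem mainTheorem9:
  fixes k :: nat and M N :: "'a Lstr"
  assumes "k > 1"
    and "models_phi k M"
    and "models_phi k N"
    and "substructure k M N"
    and "has_solution k N"
  shows "has_solution k M"
proof -
  note PM = assms(2) and PN = assms(3) and S = assms(4)
  have TM: "models_T k M" and TN: "models_T k N" using PM PN by (auto simp: models_phi_def)
  note sf = sub_facts[OF S]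
  have KMN: "Kset M \<subseteq> Kset N" using sf(1,4) by (auto simp: Kset_def)
  obtain f where f: "is_solution k N (full_index N) f" using assms(5) by (auto simp: has_solution_def)
  have fI: "\<And>l u. u \<in> Kset M \<Longrightarrow> f (Inl (l, u)) \<in> univ N \<and> Gbr N (cw N l) u (f (Inl (l, u)))"
  proof -
    fix l u assume "u \<in> Kset M"
    then have "Inl (l, u) \<in> full_index N" using KMN by (auto simp: full_index_def)
    then show "f (Inl (l, u)) \<in> univ N \<and> Gbr N (cw N l) u (f (Inl (l, u)))"
      using f by (simp add: is_solution_def)
  qed
  have fR: "\<And>u. u \<in> Kset M \<Longrightarrow> f (Inr u) \<in> univ N \<and> Hbr N u (f (Inr u))"
  proof -
    fix u assume "u \<in> Kset M"
    then have "Inr u \<in> full_index N" using KMN by (auto simp: full_index_def)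
    then show "f (Inr u) \<in> univ N \<and> Hbr N u (f (Inr u))"
      using f by (simp add: is_solution_def)
  qed
  define PG where "PG l u y = (y \<in> univ M \<and> Gbr M (cw M l) u y \<and>
           (\<exists>c\<in>univ N. gr N (cw N l) u c (f (Inl (l, u))) y \<and> (\<forall>v\<in>Kset M. pir N v c (cz N False))))" for l u y
  define PH where "PH u y = (y \<in> univ M \<and> Hbr M u y \<and>
           (\<exists>c\<in>univ N. hr N u c (f (Inr u)) y \<and> (\<forall>l. rhor N (cw N l) c (cz N False))))" for u y
  define F where "F w = (case w of Inl (l, u) \<Rightarrow> (SOME y. PG l u y) | Inr u \<Rightarrow> (SOME y. PH u y))" for w
  have FG: "\<And>l u. u \<in> Kset M \<Longrightarrow> PG l u (F (Inl (l, u)))"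
  proof -
    fix l u assume u: "u \<in> Kset M"
    have "\<exists>y. PG l u y" unfolding PG_def using fixG[OF PM PN S u] fI[OF u] by blast
    then show "PG l u (F (Inl (l, u)))" unfolding F_def by (simp add: someI_ex)
  qed
  have FH: "\<And>u. u \<in> Kset M \<Longrightarrow> PH u (F (Inr u))"
  proof -
    fix u assume u: "u \<in> Kset M"
    have "\<exists>y. PH u y" unfolding PH_def using fixH[OF PM PN S u] fR[OF u] by blast
    then show "PH u (F (Inr u))" unfolding F_def by (simp add: someI_ex)
  qed
  have "is_solution k M (full_index M) F"
    unfolding is_solution_def
  proof (intro conjI allI impI ballI)
    show "full_index M \<subseteq> full_index M" by simp
  next
    fix w assume "w \<in> full_index M"
    then show "F w \<in> univ M" using FG FH unfolding full_index_def PG_def PH_def by auto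
  next
    fix l u assume "Inl (l, u) \<in> full_index M"
    then show "Gbr M (cw M l) u (F (Inl (l, u)))" using FG unfolding full_index_def PG_def by auto
  next
    fix u assume "Inr u \<in> full_index M"
    then show "Hbr M u (F (Inr u))" using FH unfolding full_index_def PH_def by auto
  next
    fix us l
    assume H: "all_ksubsets k M us \<and> (\<forall>i<k. Inl (l, us i) \<in> full_index M) \<and> Inr (us k) \<in> full_index M"
    then have A: "all_ksubsets k M us" by simp
    have usK: "\<forall>i\<le>k. us i \<in> Kset M" using A by (simp add: all_ksubsets_def)
    have AN: "all_ksubsets k N us" by (rule ksub_transfer[OF PM PN S A])
    have usKN: "\<forall>i\<le>k. us i \<in> Kset N" using AN by (simp add: all_ksubsets_def)
    have usM: "\<forall>i\<le>k. us i \<in> univ M" using usK by (simp add: Kset_def)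
    have usN: "\<forall>i\<le>k. us i \<in> univ N" using usKN by (simp add: Kset_def)
    define xs where "xs = map (\<lambda>i. f (Inl (l, us i))) [0..<k] @ [f (Inr (us k))]"
    define xs' where "xs' = map (\<lambda>i. F (Inl (l, us i))) [0..<k] @ [F (Inr (us k))]"
    have len: "length xs = Suc k" "length xs' = Suc k" by (simp_all add: xs_def xs'_def)
    have xsi: "i < k \<Longrightarrow> xs ! i = f (Inl (l, us i))" for i by (simp add: xs_def nth_append)
    have xsk: "xs ! k = f (Inr (us k))" by (simp add: xs_def nth_append)
    have xsi': "i < k \<Longrightarrow> xs' ! i = F (Inl (l, us i))" for i by (simp add: xs'_def nth_append)
    have xsk': "xs' ! k = F (Inr (us k))" by (simp add: xs'_def nth_append)
    have QN: "Qr N l xs"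
    proof -
      have "\<forall>i<k. Inl (l, us i) \<in> full_index N" "Inr (us k) \<in> full_index N"
        using usKN by (auto simp: full_index_def)
      then show ?thesis using f AN unfolding is_solution_def xs_def by blast
    qed
    have setM': "set xs' \<subseteq> univ M"
      using FG FH usK unfolding xs'_def PG_def PH_def by auto
    have setN': "set xs' \<subseteq> univ N" using setM' sf(1) by blast
    have setN: "set xs \<subseteq> univ N" using fI fR usK unfolding xs_def by auto
    have cwl: "cw M l \<in> univ M" using Tcw[OF TM] by simp
    have "Qr N l xs'"
    proof (rule flip_all[OF TN _ len setN setN' QN usN])
      show "0 < k" using assms(1) by simp
      show "\<forall>i<k. Gbr N (cw N l) (us i) (xs!i) \<and> Gbr N (cw N l) (us i) (xs'!i)"
      proof (intro allI impI conjI)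
        fix i assume i: "i < k"
        show "Gbr N (cw N l) (us i) (xs!i)" using fI usK i xsi by simp
        have "PG l (us i) (xs'!i)" using FG usK i xsi' by simp
        then have "xs'!i \<in> univ M" "Gbr M (cw M l) (us i) (xs'!i)" unfolding PG_def by auto
        then show "Gbr N (cw N l) (us i) (xs'!i)" using sf(6)[OF cwl, of "us i" "xs'!i"] usM i sf(3) by simp
      qed
      show "Hbr N (us k) (xs!k)" using fR usK xsk by simp
      have "PH (us k) (xs'!k)" using FH usK xsk' by simp
      then have "xs'!k \<in> univ M" "Hbr M (us k) (xs'!k)" unfolding PH_def by auto
      then show "Hbr N (us k) (xs'!k)" using sf(5)[of "us k" "xs'!k"] usM by simp
      show "\<forall>i<k. \<exists>c\<in>univ N. gr N (cw N l) (us i) c (xs!i) (xs'!i) \<and> pir N (us k) c (cz N False)"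
      proof (intro allI impI)
        fix i assume i: "i < k"
        have "PG l (us i) (xs'!i)" using FG usK i xsi' by simp
        then show "\<exists>c\<in>univ N. gr N (cw N l) (us i) c (xs!i) (xs'!i) \<and> pir N (us k) c (cz N False)"
          unfolding PG_def using xsi[OF i] usK by auto
      qed
      show "\<exists>b\<in>univ N. hr N (us k) b (xs!k) (xs'!k) \<and> rhor N (cw N l) b (cz N False)"
        using \<open>PH (us k) (xs'!k)\<close> unfolding PH_def using xsk by auto
    qed
    then have "Qr M l xs'" using sf(9)[OF len(2) setM'] by simp
    then show "Qr M l (map (\<lambda>i. F (Inl (l, us i))) [0..<k] @ [F (Inr (us k))])"
      by (simp add: xs'_def)
  qed
  then show ?thesis by (auto simp: has_solution_def)
qed

end
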